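(* For the fully labeled one-dimensional rearrangement problem (LOR) on $m$ cells with a uniformly random initial permutation $\pi$, the expected total cost $T_{\mathrm{LOR}}(m)$ of the rearrangement plan computed by SweepCyclesLOR satisfies $$T_{\mathrm{LOR}}(m)\approx (m+H_m-2)\,c_p+\frac{m^2c_t}{3},$$ where $H_m=\sum_{i=1}^m 1/i$ is the $m$-th harmonic number: the expected number of pick-n-swaps is $m+H_m-2$ and the expected end-effector travel is $(1+o(1))\,m^2/3$ as $m\to\infty$.
   Context: Setting (LOR). A row of $m$ cells $1,\dots,m$, cell $i$ located at the point $i$ on the real line. Each cell initially holds exactly one item; items carry distinct labels $1,\dots,m$. An instance is a permutation $\pi$ of $\{1,\dots,m\}$, where $\pi_i$ is the label of the item initially in cell $i$; the goal is that item $i$ ends in cell $i$. A robot end-effector can hold at most one item; it starts at cell $1$ holding nothing. A pick-n-swap operation at a cell $p$: if holding nothing, pick up the item in $p$; if holding an item and $p$ contains an item, exchange the two; if holding an item and $p$ is empty, put the held item into $p$. A plan is a sequence $P=(p_0,p_1,\dots,p_N)$ of cells ($p_0=$ cell $1$) visited in order with a pick-n-swap at each of $p_1,\dots,p_N$, followed by a return to $p_{N+1}:=p_0$. Its total cost is $J_T(P)=Nc_p+\sum_{i=0}^{N}|p_i-p_{i+1}|\,c_t$ with constants $c_p,c_t>0$. SweepCyclesLOR: while some cell $i$ holds an item with label $\ne i$, let $i$ be the smallest such cell; go to $i$ and pick up its item, say with label $g$; while $g\neq i$, go to cell $g$ and swap (item $g$ is placed in cell $g$ and the item previously in cell $g$,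 with label $g'$, becomes held; set $g:=g'$); finally go to cell $i$ and place the held item. When done, return to cell $1$. *)

theory Defs
  imports "HOL-Analysis.Analysis" "HOL-Combinatorics.Permutations" "HOL-Library.Landau_Symbols"
begin

text \<open>LOR model. An arrangement maps each cell to the label of the item it holds
 (None = empty cell). A configuration is (arrangement, held item of the end-effector).\<close>

type_synonym arrangement = "nat \<Rightarrow> nat option"
type_synonym config = "arrangement \<times> nat option"

text \<open>pick-n-swap at cell p: pick up if holding nothing; exchange if holding and p occupied;
 put down if holding and p empty.  All three cases: new held := old content of p,
 new content of p := old held.\<close>
definition pns :: "config \<Rightarrow> nat \<Rightarrow> config" where
  "pns c p = ((fst c)(p := snd c), fst c p)"

text \<open>Inner loop of SweepCyclesLOR (with fuel): the end-effector holds item g, started at cell i.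
 While g \<noteq> i: go to g and swap; finally go to i and place.  Returns visited cells and final config.\<close>
fun chase :: "nat \<Rightarrow> nat \<Rightarrow> config \<Rightarrow> nat list \<times> config" where
  "chase 0 i c = ([], c)"
| "chase (Suc n) i c =
     (let g = the (snd c) in
      if g = i then ([i], pns c i)
      else (let r = chase n i (pns c g) in (g # fst r, snd r)))"

fun sweep :: "nat \<Rightarrow> nat \<Rightarrow> arrangement \<Rightarrow> nat list" where
  "sweep 0 m a = []"
| "sweep (Suc n) m a =
     (if \<exists>i\<in>{1..m}. a i \<noteq> Some i then
        (let i = (LEAST i. i \<in> {1..m} \<and> a i \<noteq> Some i);
             r = chase m i (pns (a, None) i)
         in i # fst r @ sweep n m (fst (snd r)))
      else [])"

definition init_arr :: "(nat \<Rightarrow> nat) \<Rightarrow> nat \<Rightarrow> arrangement" where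
  "init_arr \<pi> m = (\<lambda>i. if i \<in> {1..m} then Some (\<pi> i) else None)"

text \<open>The pick-n-swap cells p_1..p_N of the plan computed by SweepCyclesLOR
 (fuel m suffices for both loops; each loop terminates well within it).\<close>
definition sweep_plan :: "nat \<Rightarrow> (nat \<Rightarrow> nat) \<Rightarrow> nat list" where
  "sweep_plan m \<pi> = sweep m m (init_arr \<pi> m)"

definition num_pns :: "nat list \<Rightarrow> nat" where
  "num_pns ps = length ps"

fun path_len :: "nat list \<Rightarrow> real" where
  "path_len (x # y # zs) = \<bar>real x - real y\<bar> + path_len (y # zs)"
| "path_len _ = 0"

definition travel :: "nat list \<Rightarrow> real" where
  "travel ps = path_len (1 # ps @ [1])"

definition total_cost :: "real \<Rightarrow> real \<Rightarrow> nat list \<Rightarrow> real" where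
  "total_cost cp ct ps = real (num_pns ps) * cp + travel ps * ct"

definition expect_perm :: "nat \<Rightarrow> ((nat \<Rightarrow> nat) \<Rightarrow> real) \<Rightarrow> real" where
  "expect_perm m f = (\<Sum>\<pi>\<in>{\<pi>. \<pi> permutes {1..m}}. f \<pi>) / real (card {\<pi>. \<pi> permutes {1..m}})"

end

theory Submission
  imports Defs "HOL-Real_Asymp.Real_Asymp"
begin


fun path :: "(nat \<Rightarrow> nat) \<Rightarrow> nat \<Rightarrow> nat list \<Rightarrow> nat \<Rightarrow> bool" where
  "path p g [] i \<longleftrightarrow> g = i"
| "path p g (c # cs) i \<longleftrightarrow> c = g \<and> g \<noteq> i \<and> path p (p g) cs i"

lemma chase_path:
  assumes "path p g cs i" "distinct cs" "b i = None" "\<forall>c\<in>set cs. b c = Some (p c)" "length cs < n"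
  shows "chase n i (b, Some g) = (cs @ [i], (\<lambda>x. if x \<in> set cs \<or> x = i then Some x else b x, None))"
  using assms
proof (induction cs arbitrary: g b n)
  case Nil
  then obtain n' where n: "n = Suc n'" by (cases n) auto
  show ?case using Nil by (auto simp: n pns_def fun_eq_iff)
next
  case (Cons c cs)
  then obtain n' where n: "n = Suc n'" by (cases n) auto
  have g: "g = c" "g \<noteq> i" and pa: "path p (p g) cs i" using Cons.prems by auto
  have pn: "pns (b, Some g) g = (b(g := Some g), Some (p g))" using Cons.prems g by (simp add: pns_def)
  have IH: "chase n' i (b(g := Some g), Some (p g)) = (cs @ [i], (\<lambda>x. if x \<in> set cs \<or> x = i then Some x else (b(g := Some g)) x, None))"
    apply (rule Cons.IH[OF pa])
    using Cons.prems g n by auto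
  show ?case using g IH pn by (auto simp: n Let_def fun_eq_iff)
qed

lemma path_image: "path p g cs i \<Longrightarrow> p ` set cs \<union> {g} = set cs \<union> {i}"
  by (induction cs arbitrary: g) auto

lemma path_reach: "path p g cs i \<Longrightarrow> c \<in> set cs \<Longrightarrow> \<exists>k. (p ^^ k) c = i"
proof (induction cs arbitrary: g c)
  case Nil then show ?case by simp
next
  case (Cons a cs)
  note pr = Cons.prems and ih = Cons.IH
  show ?case
  proof (cases "c = a")
    case True
    then have "c = g" using Cons by simp
    show ?thesis
    proof (cases cs)
      case Nil then show ?thesis using Cons True \<open>c = g\<close> by (auto intro: exI[of _ 1])
    next
      case (Cons d ds)
      then have "d = p g" "d \<in> set cs" using pr by auto
      have pa: "path p (p g) cs i" using pr by simp
      obtain k where "(p ^^ k) d = i" using ih[OF pa \<open>d \<in> set cs\<close>] by blast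
      then have "(p ^^ Suc k) c = i" using \<open>d = p g\<close> \<open>c = g\<close> by (simp add: funpow_swap1)
      then show ?thesis by blast
    qed
  next
    case False then show ?thesis using Cons by auto
  qed
qed

lemma path_subset: "path p g cs i \<Longrightarrow> g \<in> S \<Longrightarrow> p ` S \<subseteq> S \<Longrightarrow> set cs \<subseteq> S"
  by (induction cs arbitrary: g) auto

lemma path_iter: "(\<forall>t<d. (p ^^ t) g \<noteq> i) \<Longrightarrow> (p ^^ d) g = i \<Longrightarrow> path p g (map (\<lambda>t. (p ^^ t) g) [0..<d]) i"
proof (induction d arbitrary: g)
  case 0 then show ?case by simp
next
  case (Suc d)
  have "map (\<lambda>t. (p ^^ t) g) [0..<Suc d] = g # map (\<lambda>t. (p ^^ t) (p g)) [0..<d]"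
    by (simp add: map_upt_Suc funpow_swap1 del: upt_Suc)
  moreover have "path p (p g) (map (\<lambda>t. (p ^^ t) (p g)) [0..<d]) i"
    apply (rule Suc.IH)
    using Suc.prems by (auto simp: funpow_Suc_right simp del: funpow.simps)
  ultimately show ?case using Suc.prems(1)[rule_format, of 0] by simp
qed

lemma path_exists:
  assumes "p permutes S" "finite S"
  shows "\<exists>cs. path p (p i) cs i \<and> distinct cs"
proof -
  have "permutation p" using assms permutation_permutes by blast
  then obtain n where n: "n > 0" "(p ^^ n) i = i" by (rule permutation_self)
  have ex: "\<exists>d. (p ^^ d) (p i) = i" using n by (metis Suc_pred funpow_Suc_right o_apply)
  define d where "d = (LEAST d. (p ^^ d) (p i) = i)"
  have dd: "(p ^^ d) (p i) = i" unfolding d_def using ex by (rule LeastI_ex)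
  have dl: "\<forall>t<d. (p ^^ t) (p i) \<noteq> i" unfolding d_def using not_less_Least by blast
  have inj: "inj (p ^^ k)" for k using assms(1) by (simp add: inj_fn permutes_inj)
  have "distinct (map (\<lambda>t. (p ^^ t) (p i)) [0..<d])"
  proof (subst distinct_map, rule conjI)
    show "inj_on (\<lambda>t. (p ^^ t) (p i)) (set [0..<d])"
    proof (rule inj_onI, rule ccontr)
      fix s t assume st: "s \<in> set [0..<d]" "t \<in> set [0..<d]" "(p ^^ s) (p i) = (p ^^ t) (p i)" "s \<noteq> t"
      { fix s t assume st: "s < d" "t < d" "(p ^^ s) (p i) = (p ^^ t) (p i)" "s < t"
        have "(p ^^ t) (p i) = (p ^^ s) ((p ^^ (t - s)) (p i))" using st
          by (metis add_diff_inverse_nat funpow_add less_imp_not_less o_apply)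
        then have e: "(p ^^ (t - s)) (p i) = p i" using st inj[of s] by (simp add: inj_eq)
        have "(p ^^ d) (p i) = (p ^^ (d - (t - s))) ((p ^^ (t - s)) (p i))" using st
          by (metis funpow_add le_add_diff_inverse2 diff_le_self le_trans less_imp_le_nat o_apply)
        then have "(p ^^ (d - (t - s))) (p i) = i" using e dd by simp
        moreover have "d - (t - s) < d" using st by auto
        ultimately have False using dl by blast }
      then show False using st by (metis atLeastLessThan_iff linorder_neqE_nat set_upt)
    qed
  qed simp
  then show ?thesis using path_iter[OF dl dd] by blast
qed


lemma path_notin: "path p g cs i \<Longrightarrow> i \<notin> set cs"
  by (induction cs arbitrary: g) auto

lemma path_len_app: "path_len (xs @ y # ys) = path_len (xs @ [y]) + path_len (y # ys)"
proof (induction xs)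
  case Nil then show ?case by simp
next
  case (Cons a xs)
  then show ?case by (cases xs) auto
qed

lemma path_len_cyc: "path p g cs i \<Longrightarrow> distinct cs \<Longrightarrow>
   path_len (cs @ [i]) = (\<Sum>c\<in>set cs. \<bar>real c - real (p c)\<bar>)"
proof (induction cs arbitrary: g)
  case Nil then show ?case by simp
next
  case (Cons c cs)
  have h: "hd (cs @ [i]) = p g" using Cons.prems by (cases cs) auto
  have "path_len ((c # cs) @ [i]) = \<bar>real c - real (hd (cs @ [i]))\<bar> + path_len (cs @ [i])"
    by (cases cs) auto
  also have "\<dots> = \<bar>real c - real (p c)\<bar> + (\<Sum>c\<in>set cs. \<bar>real c - real (p c)\<bar>)"
    using Cons h by auto
  finally show ?case using Cons.prems by simp
qed

lemma permutes_fix_closed: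
  assumes "p permutes S" "p ` C = C"
  shows "(\<lambda>x. if x \<in> C then x else p x) permutes S"
proof -
  have inj: "inj p" using assms(1) permutes_inj by blast
  have key: "p x \<in> C \<longleftrightarrow> x \<in> C" for x
    using assms(2) inj by (metis imageE image_eqI inj_eq)
  show ?thesis unfolding permutes_def
  proof (intro conjI allI impI)
    fix x assume "x \<notin> S" then show "(if x \<in> C then x else p x) = x"
      using assms(1) permutes_not_in by auto
  next
    fix y
    show "\<exists>!x. (if x \<in> C then x else p x) = y"
    proof (cases "y \<in> C")
      case True
      then show ?thesis using key by (intro ex1I[of _ y]) (auto split: if_splits)
    next
      case False
      obtain x where x: "p x = y" using assms(1) permutes_surj by (metis surjD)
      then have "x \<notin> C" using key False by auto
      then show ?thesis using x False inj by (intro ex1I[of _ x]) (auto split: if_splits simp: inj_eq)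
    qed
  qed
qed

lemma orbit_out:
  assumes "\<And>y. p y \<in> C \<longleftrightarrow> y \<in> C" "x \<notin> C"
  shows "((\<lambda>x. if x \<in> C then x else p x) ^^ k) x = (p ^^ k) x \<and> (p ^^ k) x \<notin> C"
  using assms by (induction k) auto

lemma orbit_in:
  assumes "\<And>y. p y \<in> C \<longleftrightarrow> y \<in> C" "x \<in> C"
  shows "(p ^^ k) x \<in> C"
  using assms by (induction k) auto

lemma funpow_fix: "p x = x \<Longrightarrow> (p ^^ k) x = x"
  by (induction k) auto

definition moved :: "nat \<Rightarrow> (nat \<Rightarrow> nat) \<Rightarrow> nat" where
  "moved m p = card {x\<in>{1..m}. p x \<noteq> x}"
definition NLs :: "nat \<Rightarrow> (nat \<Rightarrow> nat) \<Rightarrow> nat set" where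
  "NLs m p = {x\<in>{1..m}. p x \<noteq> x \<and> (\<forall>k. x \<le> (p ^^ k) x)}"
definition Sd :: "nat \<Rightarrow> (nat \<Rightarrow> nat) \<Rightarrow> real" where
  "Sd m p = (\<Sum>x\<in>{1..m}. \<bar>real x - real (p x)\<bar>)"



lemma sweep_main:
  assumes "p permutes {1..m}" "moved m p \<le> n" "1 \<le> q" "q \<le> m + 1" "\<forall>x\<in>{1..m}. p x \<noteq> x \<longrightarrow> q \<le> x"
  shows "length (sweep n m (init_arr p m)) = moved m p + card (NLs m p)
     \<and> Sd m p \<le> path_len (q # sweep n m (init_arr p m) @ [1])
     \<and> path_len (q # sweep n m (init_arr p m) @ [1]) \<le> Sd m p + 2 * real m + 1 - real q"
  using assms
proof (induction n arbitrary: p q)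
  case 0
  have fx: "\<forall>x\<in>{1..m}. p x = x" using 0 by (auto simp: moved_def)
  then have "NLs m p = {}" "Sd m p = 0" by (auto simp: NLs_def Sd_def)
  then show ?case using 0 by (auto simp: moved_def)
next
  case (Suc n)
  let ?S = "{1..m::nat}"
  have cond: "(\<exists>i\<in>?S. init_arr p m i \<noteq> Some i) \<longleftrightarrow> (\<exists>i\<in>?S. p i \<noteq> i)"
    by (auto simp: init_arr_def)
  show ?case
  proof (cases "\<exists>i\<in>?S. p i \<noteq> i")
    case False
    then have "NLs m p = {}" "Sd m p = 0" "moved m p = 0" by (auto simp: NLs_def Sd_def moved_def)
    moreover have "sweep (Suc n) m (init_arr p m) = []" using False cond by simp
    ultimately show ?thesis using Suc.prems by auto
  next
    case True
    define i where "i = (LEAST i. i \<in> ?S \<and> p i \<noteq> i)"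
    have lp: "(\<lambda>i. i \<in> ?S \<and> init_arr p m i \<noteq> Some i) = (\<lambda>i. i \<in> ?S \<and> p i \<noteq> i)"
      by (auto simp: init_arr_def fun_eq_iff)
    have iS: "i \<in> ?S" "p i \<noteq> i" using True unfolding i_def by (metis (mono_tags, lifting) LeastI)+
    have ile: "\<And>x. x \<in> ?S \<Longrightarrow> p x \<noteq> x \<Longrightarrow> i \<le> x" unfolding i_def by (simp add: Least_le)
    have perm: "p permutes ?S" by fact
    obtain cs where cs: "path p (p i) cs i" "distinct cs"
      using path_exists[OF perm] by blast
    have inotin: "i \<notin> set cs" using path_notin[OF cs(1)] .
    define C where "C = insert i (set cs)"
    have pC: "p ` C = C" using path_image[OF cs(1)] unfolding C_def by auto
    have inj: "inj p" using perm permutes_inj by blast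
    have key: "p x \<in> C \<longleftrightarrow> x \<in> C" for x
    proof
      assume "p x \<in> C"
      then have "p x \<in> p ` C" using pC by simp
      then obtain z where "z \<in> C" "p x = p z" by blast
      then show "x \<in> C" using inj by (simp add: inj_eq)
    next
      assume "x \<in> C" then show "p x \<in> C" using pC by blast
    qed
    have CS: "C \<subseteq> ?S"
    proof -
      have "p i \<in> ?S" using iS(1) permutes_in_image[OF perm] by blast
      moreover have "p ` ?S \<subseteq> ?S" using permutes_image[OF perm] by simp
      ultimately have "set cs \<subseteq> ?S" by (rule path_subset[OF cs(1)])
      then show ?thesis using iS(1) unfolding C_def by simp
    qed
    have cardC: "card C = Suc (length cs)" unfolding C_def using cs(2) inotin by (simp add: distinct_card)
    have lencs: "length cs < m" using card_mono[OF _ CS] cardC by simp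
    have Cmis: "p y \<noteq> y" if "y \<in> C" for y
    proof
      assume py: "p y = y"
      show False
      proof (cases "y = i")
        case True then show False using iS py by simp
      next
        case False
        then have "y \<in> set cs" using that C_def by auto
        then obtain k where "(p ^^ k) y = i" using path_reach[OF cs(1)] by blast
        then show False using funpow_fix[of p y k, OF py] False by simp
      qed
    qed
    define p' where "p' = (\<lambda>x. if x \<in> C then x else p x)"
    have perm': "p' permutes ?S" unfolding p'_def by (rule permutes_fix_closed[OF perm pC])
    have mis': "{x\<in>?S. p x \<noteq> x} = C \<union> {x\<in>?S. p' x \<noteq> x}" "C \<inter> {x\<in>?S. p' x \<noteq> x} = {}"
      using CS Cmis unfolding p'_def by auto
    have movedeq: "moved m p = card C + moved m p'"
      unfolding moved_def mis'(1) by (rule card_Un_disjoint) (use mis' CS in \<open>auto intro: finite_subset\<close>)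
    have NLeq: "NLs m p = insert i (NLs m p')" and inl: "i \<notin> NLs m p'"
    proof -
      show "i \<notin> NLs m p'" unfolding NLs_def p'_def C_def by auto
      have iN: "i \<in> NLs m p"
      proof -
        have "i \<le> (p ^^ k) i" for k
        proof -
          have "(p ^^ k) i \<in> C" using orbit_in[of p C i k] key C_def by auto
          then show ?thesis using ile CS Cmis by auto
        qed
        then show ?thesis using iS unfolding NLs_def by auto
      qed
      have A: "x \<in> NLs m p'" if "x \<in> NLs m p" "x \<noteq> i" for x
      proof -
        have xn: "x \<notin> C"
        proof
          assume "x \<in> C"
          then have "x \<in> set cs" using that C_def by auto
          then obtain k where "(p ^^ k) x = i" using path_reach[OF cs(1)] by blast
          moreover have xl: "\<forall>k. x \<le> (p ^^ k) x" "x \<in> ?S" "p x \<noteq> x" using that(1) unfolding NLs_def by auto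
          ultimately have "x \<le> i" by metis
          moreover have "i \<le> x" using ile xl by blast
          ultimately show False using that(2) by simp
        qed
        have orb: "(p' ^^ k) x = (p ^^ k) x" for k using orbit_out[of p C x, OF key xn] unfolding p'_def by blast
        have p'x: "p' x = p x" using xn unfolding p'_def by simp
        show ?thesis using that orb p'x unfolding NLs_def by simp
      qed
      have B: "x \<in> NLs m p" if "x \<in> NLs m p'" for x
      proof -
        have xn: "x \<notin> C" using that unfolding NLs_def p'_def by auto
        have orb: "(p' ^^ k) x = (p ^^ k) x" for k using orbit_out[of p C x, OF key xn] unfolding p'_def by blast
        have p'x: "p' x = p x" using xn unfolding p'_def by simp
        show ?thesis using that orb p'x unfolding NLs_def by simp
      qed
      show "NLs m p = insert i (NLs m p')" using A B iN by blast
    qed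
    have finN: "finite (NLs m p')" unfolding NLs_def by auto
    have Sdeq: "Sd m p = (\<Sum>x\<in>C. \<bar>real x - real (p x)\<bar>) + Sd m p'"
    proof -
      have "Sd m p = (\<Sum>x\<in>?S - C. \<bar>real x - real (p x)\<bar>) + (\<Sum>x\<in>C. \<bar>real x - real (p x)\<bar>)"
        unfolding Sd_def using sum.subset_diff[OF CS] by auto
      moreover have "Sd m p' = (\<Sum>x\<in>?S - C. \<bar>real x - real (p' x)\<bar>) + (\<Sum>x\<in>C. \<bar>real x - real (p' x)\<bar>)"
        unfolding Sd_def using sum.subset_diff[OF CS] by auto
      moreover have "(\<Sum>x\<in>C. \<bar>real x - real (p' x)\<bar>) = 0" unfolding p'_def by simp
      moreover have "(\<Sum>x\<in>?S - C. \<bar>real x - real (p' x)\<bar>) = (\<Sum>x\<in>?S - C. \<bar>real x - real (p x)\<bar>)"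
        unfolding p'_def by (rule sum.cong) auto
      ultimately show ?thesis by simp
    qed
    have cyclen: "path_len (i # cs @ [i]) = (\<Sum>x\<in>C. \<bar>real x - real (p x)\<bar>)"
    proof -
      have h: "hd (cs @ [i]) = p i" using cs(1) by (cases cs) auto
      have "path_len (i # cs @ [i]) = \<bar>real i - real (hd (cs @ [i]))\<bar> + path_len (cs @ [i])"
        by (cases cs) auto
      then show ?thesis using h path_len_cyc[OF cs] inotin unfolding C_def by simp
    qed
    have arr': "(\<lambda>x. if x \<in> set cs \<or> x = i then Some x else ((init_arr p m)(i := None)) x) = init_arr p' m"
      using CS unfolding init_arr_def p'_def C_def fun_eq_iff by auto
    have ch: "chase m i (pns (init_arr p m, None) i) = (cs @ [i], (init_arr p' m, None))"
    proof -
      have "pns (init_arr p m, None) i = ((init_arr p m)(i := None), Some (p i))"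
        using iS by (simp add: pns_def init_arr_def)
      moreover have "chase m i ((init_arr p m)(i := None), Some (p i)) =
          (cs @ [i], (\<lambda>x. if x \<in> set cs \<or> x = i then Some x else ((init_arr p m)(i := None)) x, None))"
        apply (rule chase_path[OF cs])
        using lencs inotin CS unfolding C_def by (auto simp: init_arr_def)
      ultimately show ?thesis using arr' by simp
    qed
    have sw: "sweep (Suc n) m (init_arr p m) = i # (cs @ [i]) @ sweep n m (init_arr p' m)"
    proof -
      have c1: "\<exists>i\<in>?S. init_arr p m i \<noteq> Some i" using cond True by blast
      have least: "(LEAST i. i \<in> ?S \<and> init_arr p m i \<noteq> Some i) = i" unfolding lp i_def ..
      show ?thesis unfolding sweep.simps if_P[OF c1] least Let_def ch by simp
    qed
    have mp': "moved m p' \<le> n" using movedeq cardC Suc.prems(2) by simp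
    have q': "\<forall>x\<in>?S. p' x \<noteq> x \<longrightarrow> i \<le> x" using ile unfolding p'_def by auto
    have i1: "1 \<le> i" "i \<le> m + 1" using iS by auto
    note IH = Suc.IH[OF perm' mp' i1 q']
    let ?r = "sweep n m (init_arr p' m)"
    have qi: "q \<le> i" using Suc.prems(5) iS by auto
    have qir: "real q \<le> real i" using qi by simp
    have pl: "path_len (q # (i # (cs @ [i]) @ ?r) @ [1]) = (real i - real q) + path_len (i # cs @ [i]) + path_len (i # ?r @ [1])"
    proof -
      have "path_len (q # (i # (cs @ [i]) @ ?r) @ [1]) = path_len ((q # i # cs) @ i # (?r @ [1]))" by simp
      also have "\<dots> = path_len ((q # i # cs) @ [i]) + path_len (i # ?r @ [1])" by (rule path_len_app)
      also have "path_len ((q # i # cs) @ [i]) = \<bar>real q - real i\<bar> + path_len (i # cs @ [i])" by simp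
      finally show ?thesis using qi by simp
    qed
    show ?thesis
      unfolding sw using IH pl cyclen Sdeq movedeq NLeq inl finN cardC qir by auto
  qed
qed



definition lead :: "nat \<Rightarrow> (nat \<Rightarrow> nat) \<Rightarrow> nat set" where
  "lead m p = {x\<in>{1..m}. \<forall>k. x \<le> (p ^^ k) x}"
definition fixs :: "nat \<Rightarrow> (nat \<Rightarrow> nat) \<Rightarrow> nat set" where
  "fixs m p = {x\<in>{1..m}. p x = x}"

lemma card_fix_val:
  assumes "finite S" "x \<in> S" "y \<in> S"
  shows "card {p. p permutes S \<and> p x = y} = fact (card S - 1)"
proof -
  let ?f = "\<lambda>p. Transposition.transpose x y \<circ> p"
  have "bij_betw ?f {p. p permutes S \<and> p x = y} {p. p permutes S - {x}}"
  proof (rule bij_betw_byWitness[where f' = ?f])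
    show "\<forall>a\<in>{p. p permutes S \<and> p x = y}. ?f (?f a) = a" by (auto simp: fun_eq_iff)
    show "\<forall>a\<in>{p. p permutes S - {x}}. ?f (?f a) = a" by (auto simp: fun_eq_iff)
    show "?f ` {p. p permutes S \<and> p x = y} \<subseteq> {p. p permutes S - {x}}"
    proof (rule image_subsetI)
      fix p assume "p \<in> {p. p permutes S \<and> p x = y}"
      then have p: "p permutes S" "p x = y" by auto
      have "?f p permutes S" using p assms by (intro permutes_compose permutes_swap_id) auto
      moreover have "?f p x = x" using p by simp
      ultimately show "?f p \<in> {p. p permutes S - {x}}" unfolding permutes_def by auto
    qed
    show "?f ` {p. p permutes S - {x}} \<subseteq> {p. p permutes S \<and> p x = y}"
    proof (rule image_subsetI)
      fix p assume "p \<in> {p. p permutes S - {x}}"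
      then have p: "p permutes S - {x}" by simp
      then have "p permutes S" by (rule permutes_subset) auto
      then have "?f p permutes S" using assms by (intro permutes_compose permutes_swap_id) auto
      moreover have "p x = x" using p permutes_not_in by fastforce
      ultimately show "?f p \<in> {p. p permutes S \<and> p x = y}" by simp
    qed
  qed
  then have "card {p. p permutes S \<and> p x = y} = card {p. p permutes S - {x}}" by (rule bij_betw_same_card)
  also have "\<dots> = fact (card S - 1)" using assms by (intro card_permutations) auto
  finally show ?thesis .
qed

lemma card_filter_sum: "finite S \<Longrightarrow> real (card {x\<in>S. P x}) = (\<Sum>x\<in>S. if P x then 1 else 0)"
  by (simp add: sum.If_cases Int_def)

lemma sum_fixs:
  assumes "m \<ge> 1"
  shows "(\<Sum>p\<in>{p. p permutes {1..m}}. real (card (fixs m p))) = fact m"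
proof -
  let ?P = "{p. p permutes {1..m::nat}}"
  have fP: "finite ?P" by (simp add: finite_permutations)
  have "(\<Sum>p\<in>?P. real (card (fixs m p))) = (\<Sum>p\<in>?P. \<Sum>x\<in>{1..m}. if p x = x then 1 else 0)"
    unfolding fixs_def by (intro sum.cong refl card_filter_sum) simp
  also have "\<dots> = (\<Sum>x\<in>{1..m}. \<Sum>p\<in>?P. if p x = x then 1 else 0)" by (rule sum.swap)
  also have "\<dots> = (\<Sum>x\<in>{1..m}. real (card {p. p permutes {1..m} \<and> p x = x}))"
    using fP card_filter_sum[OF fP, of "\<lambda>p. p _ = _"] by simp
  also have "\<dots> = (\<Sum>x\<in>{1..m}. fact (m - 1))" by (rule sum.cong) (auto simp: card_fix_val)
  also have "\<dots> = fact m" using assms by (simp add: fact_reduce)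
  finally show ?thesis .
qed


lemma sum_gauss_aux: "(\<Sum>x\<in>{1..m}. \<bar>real (Suc m) - real x\<bar>) = real m * (real m + 1) / 2"
proof -
  have "(\<Sum>x\<in>{1..m}. \<bar>real (Suc m) - real x\<bar>) = (\<Sum>x\<in>{1..m}. real (Suc m) - real x)"
    by (rule sum.cong) auto
  also have "\<dots> = real m * real (Suc m) - (\<Sum>x\<in>{1..m}. real x)" by (simp add: sum_subtractf)
  finally show ?thesis using double_gauss_sum_from_Suc_0[of m, where 'a = real] by (simp add: field_simps)
qed

lemma sum_absdiff: "(\<Sum>x\<in>{1..m}. \<Sum>y\<in>{1..m}. \<bar>real x - real y\<bar>) = (real m ^ 3 - real m) / 3"
proof (induction m)
  case 0 then show ?case by simp
next
  case (Suc m)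
  have ins: "{1..Suc m} = insert (Suc m) {1..m}" by auto
  let ?A = "(\<Sum>y\<in>{1..m}. \<bar>real (Suc m) - real y\<bar>)"
  let ?D = "(\<Sum>x\<in>{1..m}. \<Sum>y\<in>{1..m}. \<bar>real x - real y\<bar>)"
  have sym: "(\<Sum>x\<in>{1..m}. \<bar>real x - real (Suc m)\<bar>) = ?A"
    by (rule sum.cong) auto
  have "(\<Sum>x\<in>{1..Suc m}. \<Sum>y\<in>{1..Suc m}. \<bar>real x - real y\<bar>)
      = ?A + (\<Sum>x\<in>{1..m}. \<bar>real x - real (Suc m)\<bar> + (\<Sum>y\<in>{1..m}. \<bar>real x - real y\<bar>))"
    unfolding ins by (simp add: sum.insert del: of_nat_Suc)
  also have "\<dots> = ?A + ((\<Sum>x\<in>{1..m}. \<bar>real x - real (Suc m)\<bar>) + ?D)"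
    by (simp only: sum.distrib)
  also have "\<dots> = 2 * (real m * (real m + 1) / 2) + (real m ^ 3 - real m) / 3"
    unfolding sym Suc.IH sum_gauss_aux by simp
  finally show ?case by (simp add: field_simps power3_eq_cube)
qed

lemma sum_Sd:
  assumes "m \<ge> 1"
  shows "(\<Sum>p\<in>{p. p permutes {1..m}}. Sd m p) = fact (m - 1) * ((real m ^ 3 - real m) / 3)"
proof -
  let ?P = "{p. p permutes {1..m::nat}}"
  have fP: "finite ?P" by (simp add: finite_permutations)
  have "(\<Sum>p\<in>?P. Sd m p) = (\<Sum>x\<in>{1..m}. \<Sum>p\<in>?P. \<bar>real x - real (p x)\<bar>)"
    unfolding Sd_def by (rule sum.swap)
  also have "\<dots> = (\<Sum>x\<in>{1..m}. \<Sum>y\<in>{1..m}. fact (m - 1) * \<bar>real x - real y\<bar>)"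
  proof (rule sum.cong[OF refl])
    fix x assume x: "x \<in> {1..m}"
    have img: "(\<lambda>p. p x) ` ?P \<subseteq> {1..m}" using x permutes_in_image by fastforce
    have "(\<Sum>p\<in>?P. \<bar>real x - real (p x)\<bar>) = (\<Sum>y\<in>{1..m}. \<Sum>p\<in>{p. p \<in> ?P \<and> p x = y}. \<bar>real x - real (p x)\<bar>)"
      by (rule sum.group[OF fP _ img, symmetric]) simp
    also have "\<dots> = (\<Sum>y\<in>{1..m}. fact (m - 1) * \<bar>real x - real y\<bar>)"
    proof (rule sum.cong[OF refl])
      fix y assume y: "y \<in> {1..m}"
      have "(\<Sum>p\<in>{p. p \<in> ?P \<and> p x = y}. \<bar>real x - real (p x)\<bar>) = (\<Sum>p\<in>{p. p permutes {1..m} \<and> p x = y}. \<bar>real x - real y\<bar>)"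
        by (rule sum.cong) auto
      also have "\<dots> = real (card {p. p permutes {1..m} \<and> p x = y}) * \<bar>real x - real y\<bar>" by simp
      also have "\<dots> = fact (m - 1) * \<bar>real x - real y\<bar>" using card_fix_val[of "{1..m}" x y] x y by simp
      finally show "(\<Sum>p\<in>{p. p \<in> ?P \<and> p x = y}. \<bar>real x - real (p x)\<bar>) = fact (m - 1) * \<bar>real x - real y\<bar>" .
    qed
    finally show "(\<Sum>p\<in>?P. \<bar>real x - real (p x)\<bar>) = (\<Sum>y\<in>{1..m}. fact (m - 1) * \<bar>real x - real y\<bar>)" .
  qed
  also have "\<dots> = fact (m - 1) * (\<Sum>x\<in>{1..m}. \<Sum>y\<in>{1..m}. \<bar>real x - real y\<bar>)"
    by (simp add: sum_distrib_left)
  finally show ?thesis using sum_absdiff by simp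
qed


lemma lead_insert:
  assumes q: "q permutes {1..m}" and b: "b \<in> {1..Suc m}"
  defines "p \<equiv> Transposition.transpose (Suc m) b \<circ> q"
  shows "lead (Suc m) p = lead m q \<union> (if b = Suc m then {Suc m} else {})"
proof -
  let ?a = "Suc m"
  have qa: "q ?a = ?a" by (rule permutes_not_in[OF q]) simp
  have qS: "(q ^^ j) x \<in> {1..m}" if "x \<in> {1..m}" for x j
    using permutes_in_funpow_image[OF q that] .
  have qx: "q y \<in> {1..m}" if "y \<in> {1..m}" for y using permutes_in_image[OF q, of y] that by simp
  have pdef: "p y = Transposition.transpose ?a b (q y)" for y unfolding p_def by simp
  have eqv: "(\<forall>k. x \<le> (p ^^ k) x) \<longleftrightarrow> (\<forall>k. x \<le> (q ^^ k) x)" if x: "x \<in> {1..m}" for x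
  proof
    have O2: "\<exists>k. (q ^^ j) x = (p ^^ k) x" for j
    proof (induction j)
      case 0 show ?case by (rule exI[of _ 0]) simp
    next
      case (Suc j)
      then obtain k where k: "(q ^^ j) x = (p ^^ k) x" by blast
      let ?y = "(q ^^ j) x"
      have yS: "?y \<in> {1..m}" using qS[OF x] .
      have qy: "q ?y \<in> {1..m}" using qx[OF yS] .
      show ?case
      proof (cases "q ?y = b \<and> b \<noteq> ?a")
        case True
        have "p ?y = ?a" using True pdef by simp
        moreover have "p ?a = b" using pdef qa by simp
        ultimately have "(p ^^ Suc (Suc k)) x = q ?y" using k True by simp
        then have "(q ^^ Suc j) x = (p ^^ Suc (Suc k)) x" by simp
        then show ?thesis by blast
      next
        case False
        then have "p ?y = q ?y" using pdef qy by (auto simp: transpose_def)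
        then have "(q ^^ Suc j) x = (p ^^ Suc k) x" using k by simp
        then show ?thesis by blast
      qed
    qed
    show "\<forall>k. x \<le> (q ^^ k) x" if h: "\<forall>k. x \<le> (p ^^ k) x"
    proof
      fix j
      obtain k where "(q ^^ j) x = (p ^^ k) x" using O2 by blast
      then show "x \<le> (q ^^ j) x" using h by simp
    qed
  next
    have O1: "(\<exists>j. (p ^^ k) x = (q ^^ j) x) \<or> ((p ^^ k) x = ?a \<and> (\<exists>j. b = (q ^^ j) x))" for k
    proof (induction k)
      case 0 show ?case by (rule disjI1, rule exI[of _ 0]) simp
    next
      case (Suc k)
      then show ?case
      proof
        assume "\<exists>j. (p ^^ k) x = (q ^^ j) x"
        then obtain j where j: "(p ^^ k) x = (q ^^ j) x" by blast
        let ?y = "(q ^^ j) x"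
        have qy: "q ?y \<in> {1..m}" using qx[OF qS[OF x]] .
        show ?thesis
        proof (cases "q ?y = b")
          case True
          then have "p ?y = ?a" using pdef by simp
          then have "(p ^^ Suc k) x = ?a" using j by simp
          moreover have "b = (q ^^ Suc j) x" using True by simp
          ultimately show ?thesis by blast
        next
          case False
          then have "p ?y = q ?y" using pdef qy by (auto simp: transpose_def)
          then have "(p ^^ Suc k) x = (q ^^ Suc j) x" using j by simp
          then show ?thesis by blast
        qed
      next
        assume "(p ^^ k) x = ?a \<and> (\<exists>j. b = (q ^^ j) x)"
        then obtain j where "(p ^^ k) x = ?a" "b = (q ^^ j) x" by blast
        moreover have "p ?a = b" using pdef qa by simp
        ultimately show ?thesis by auto
      qed
    qed
    show "\<forall>k. x \<le> (p ^^ k) x" if h: "\<forall>k. x \<le> (q ^^ k) x"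
    proof
      fix k
      from O1[of k] show "x \<le> (p ^^ k) x"
      proof
        assume "\<exists>j. (p ^^ k) x = (q ^^ j) x"
        then obtain j where "(p ^^ k) x = (q ^^ j) x" by blast
        then show ?thesis using h by simp
      next
        assume "(p ^^ k) x = ?a \<and> (\<exists>j. b = (q ^^ j) x)" then show ?thesis using x by auto
      qed
    qed
  qed
  have aeq: "?a \<in> lead (Suc m) p \<longleftrightarrow> b = ?a"
  proof
    assume "?a \<in> lead (Suc m) p"
    then have "?a \<le> (p ^^ 1) ?a" unfolding lead_def by blast
    then have "?a \<le> b" using pdef qa by simp
    then show "b = ?a" using b by simp
  next
    assume "b = ?a"
    then have "p ?a = ?a" using pdef qa by simp
    then show "?a \<in> lead (Suc m) p" unfolding lead_def using funpow_fix[of p ?a] by simp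
  qed
  show ?thesis
  proof (intro set_eqI iffI)
    fix x assume "x \<in> lead (Suc m) p"
    then show "x \<in> lead m q \<union> (if b = ?a then {?a} else {})"
      using eqv aeq unfolding lead_def by (cases "x = ?a") auto
  next
    fix x assume "x \<in> lead m q \<union> (if b = ?a then {?a} else {})"
    then show "x \<in> lead (Suc m) p"
      using eqv aeq unfolding lead_def by (auto split: if_splits)
  qed
qed

lemma sum_lead: "(\<Sum>p\<in>{p. p permutes {1..m}}. real (card (lead m p))) = fact m * harm m"
proof (induction m)
  case 0 then show ?case by (simp add: lead_def harm_def)
next
  case (Suc m)
  have ins: "{1..Suc m} = insert (Suc m) {1..m}" by auto
  have "(\<Sum>p\<in>{p. p permutes {1..Suc m}}. real (card (lead (Suc m) p)))
     = (\<Sum>b\<in>{1..Suc m}. \<Sum>q\<in>{p. p permutes {1..m}}. real (card (lead (Suc m) (Transposition.transpose (Suc m) b \<circ> q))))"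
    unfolding ins by (rule sum_over_permutations_insert) auto
  also have "\<dots> = (\<Sum>b\<in>{1..Suc m}. \<Sum>q\<in>{p. p permutes {1..m}}. real (card (lead m q)) + (if b = Suc m then 1 else 0))"
  proof (intro sum.cong refl)
    fix b q assume b: "b \<in> {1..Suc m}" and "q \<in> {p. p permutes {1..m}}"
    then have q: "q permutes {1..m}" by simp
    have fin: "finite (lead m q)" unfolding lead_def by simp
    have "Suc m \<notin> lead m q" unfolding lead_def by simp
    then show "real (card (lead (Suc m) (Transposition.transpose (Suc m) b \<circ> q))) = real (card (lead m q)) + (if b = Suc m then 1 else 0)"
      unfolding lead_insert[OF q b] using fin by auto
  qed
  also have "\<dots> = real (Suc m) * (fact m * harm m) + fact m"
    using Suc.IH by (simp add: sum.distrib card_permutations finite_permutations)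
  also have "\<dots> = fact (Suc m) * harm (Suc m)"
    by (simp add: harm_Suc field_simps)
  finally show ?case .
qed



lemma plan_facts:
  assumes p: "p permutes {1..m}"
  shows "real (num_pns (sweep_plan m p)) = real m + real (card (lead m p)) - 2 * real (card (fixs m p))"
    and "Sd m p \<le> travel (sweep_plan m p)" "travel (sweep_plan m p) \<le> Sd m p + 2 * real m"
proof -
  have "moved m p \<le> card {1..m}" unfolding moved_def by (rule card_mono) auto
  then have mv: "moved m p \<le> m" by simp
  note M = sweep_main[OF p mv, of 1]
  have M': "length (sweep m m (init_arr p m)) = moved m p + card (NLs m p)"
     "Sd m p \<le> path_len (1 # sweep m m (init_arr p m) @ [1])"
     "path_len (1 # sweep m m (init_arr p m) @ [1]) \<le> Sd m p + 2 * real m + 1 - real (1::nat)"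
    using M by auto
  show "Sd m p \<le> travel (sweep_plan m p)" "travel (sweep_plan m p) \<le> Sd m p + 2 * real m"
    using M' unfolding travel_def sweep_plan_def by auto
  have fl: "fixs m p \<subseteq> lead m p" unfolding fixs_def lead_def using funpow_fix[of p] by auto
  have NL: "NLs m p = lead m p - fixs m p" unfolding NLs_def lead_def fixs_def by auto
  have fF: "finite (fixs m p)" unfolding fixs_def by simp
  have fL: "finite (lead m p)" unfolding lead_def by simp
  have cNL: "card (NLs m p) = card (lead m p) - card (fixs m p)" unfolding NL by (rule card_Diff_subset[OF fF fl])
  have cNL': "card (fixs m p) \<le> card (lead m p)" using card_mono[OF fL fl] .
  have mvd: "{x\<in>{1..m}. p x \<noteq> x} = {1..m} - fixs m p" unfolding fixs_def by auto
  have fS: "fixs m p \<subseteq> {1..m}" unfolding fixs_def by auto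
  have cmv: "moved m p = m - card (fixs m p)" unfolding moved_def mvd
    using card_Diff_subset[OF fF fS] by simp
  have cF: "card (fixs m p) \<le> m" using card_mono[OF _ fS] by simp
  show "real (num_pns (sweep_plan m p)) = real m + real (card (lead m p)) - 2 * real (card (fixs m p))"
    unfolding num_pns_def sweep_plan_def M'(1) cmv cNL using cF cNL' by (simp add: of_nat_diff)
qed

lemma card_P: "card {p. p permutes {1..m::nat}} = fact m"
  by (simp add: card_permutations)

lemma EN:
  assumes "m \<ge> 1"
  shows "expect_perm m (\<lambda>\<pi>. real (num_pns (sweep_plan m \<pi>))) = real m + harm m - 2"
proof -
  let ?P = "{p. p permutes {1..m::nat}}"
  have fP: "finite ?P" by (simp add: finite_permutations)
  have "(\<Sum>p\<in>?P. real (num_pns (sweep_plan m p))) = (\<Sum>p\<in>?P. real m + real (card (lead m p)) - 2 * real (card (fixs m p)))"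
    by (rule sum.cong) (auto simp: plan_facts)
  also have "\<dots> = fact m * real m + fact m * harm m - 2 * fact m"
    using sum_lead[of m] sum_fixs[OF assms] card_P[of m]
    by (simp add: sum.distrib sum_subtractf sum_distrib_left[symmetric])
  finally show ?thesis unfolding expect_perm_def card_P by (simp add: field_simps)
qed

lemma ET_bounds:
  assumes "m \<ge> 1"
  shows "(real m ^ 2 - 1) / 3 \<le> expect_perm m (\<lambda>\<pi>. travel (sweep_plan m \<pi>))"
    and "expect_perm m (\<lambda>\<pi>. travel (sweep_plan m \<pi>)) \<le> (real m ^ 2 - 1) / 3 + 2 * real m"
proof -
  let ?P = "{p. p permutes {1..m::nat}}"
  have fP: "finite ?P" by (simp add: finite_permutations)
  have fm: "fact m = real m * fact (m - 1)" using assms by (simp add: fact_reduce)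
  have ES: "(\<Sum>p\<in>?P. Sd m p) / fact m = (real m ^ 2 - 1) / 3"
    unfolding sum_Sd[OF assms] fm using assms by (simp add: field_simps power2_eq_square power3_eq_cube)
  have lo: "(\<Sum>p\<in>?P. Sd m p) \<le> (\<Sum>p\<in>?P. travel (sweep_plan m p))"
    by (rule sum_mono) (auto simp: plan_facts)
  have hi: "(\<Sum>p\<in>?P. travel (sweep_plan m p)) \<le> (\<Sum>p\<in>?P. Sd m p + 2 * real m)"
    by (rule sum_mono) (auto simp: plan_facts)
  have hi': "(\<Sum>p\<in>?P. Sd m p + 2 * real m) = (\<Sum>p\<in>?P. Sd m p) + fact m * (2 * real m)"
    using card_P[of m] by (simp add: sum.distrib)
  have fpos: "(0::real) < fact m" by simp
  show "(real m ^ 2 - 1) / 3 \<le> expect_perm m (\<lambda>\<pi>. travel (sweep_plan m \<pi>))"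
    unfolding expect_perm_def card_P ES[symmetric] using lo fpos by (simp add: divide_right_mono)
  have "expect_perm m (\<lambda>\<pi>. travel (sweep_plan m \<pi>)) \<le> ((\<Sum>p\<in>?P. Sd m p) + fact m * (2 * real m)) / fact m"
    unfolding expect_perm_def card_P using hi hi' fpos by (simp add: divide_right_mono)
  also have "\<dots> = (real m ^ 2 - 1) / 3 + 2 * real m" using ES fpos by (simp add: add_divide_distrib)
  finally show "expect_perm m (\<lambda>\<pi>. travel (sweep_plan m \<pi>)) \<le> (real m ^ 2 - 1) / 3 + 2 * real m" .
qed


lemma ET_equiv: "(\<lambda>m::nat. expect_perm m (\<lambda>\<pi>. travel (sweep_plan m \<pi>))) \<sim>[at_top] (\<lambda>m. real m ^ 2 / 3)"
proof (rule asymp_equivI')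
  let ?E = "\<lambda>m::nat. expect_perm m (\<lambda>\<pi>. travel (sweep_plan m \<pi>))"
  have L: "((\<lambda>m::nat. ((real m ^ 2 - 1) / 3) / (real m ^ 2 / 3)) \<longlongrightarrow> 1) at_top" by real_asymp
  have U: "((\<lambda>m::nat. ((real m ^ 2 - 1) / 3 + 2 * real m) / (real m ^ 2 / 3)) \<longlongrightarrow> 1) at_top" by real_asymp
  show "((\<lambda>m. ?E m / (real m ^ 2 / 3)) \<longlongrightarrow> 1) at_top"
  proof (rule tendsto_sandwich[OF _ _ L U])
    show "\<forall>\<^sub>F m in at_top. ((real m ^ 2 - 1) / 3) / (real m ^ 2 / 3) \<le> ?E m / (real m ^ 2 / 3)"
      using eventually_ge_at_top[of "1::nat"]
      by eventually_elim (rule divide_right_mono[OF ET_bounds(1)], auto)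
    show "\<forall>\<^sub>F m in at_top. ?E m / (real m ^ 2 / 3) \<le> ((real m ^ 2 - 1) / 3 + 2 * real m) / (real m ^ 2 / 3)"
      using eventually_ge_at_top[of "1::nat"]
      by eventually_elim (rule divide_right_mono[OF ET_bounds(2)], auto)
  qed
qed

lemma harm_ge1: "m \<ge> 1 \<Longrightarrow> harm m \<ge> (1::real)"
proof (induction m)
  case 0 then show ?case by simp
next
  case (Suc m)
  then show ?case by (cases "m = 0") (auto simp: harm_Suc harm_def intro: add_increasing2)
qed

lemma total_equiv:
  assumes cp: "cp > 0" and ct: "ct > 0"
  shows "(\<lambda>m::nat. expect_perm m (\<lambda>\<pi>. total_cost cp ct (sweep_plan m \<pi>)))
               \<sim>[at_top] (\<lambda>m. (real m + harm m - 2) * cp + real m ^ 2 * ct / 3)"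
proof (rule asymp_equivI')
  let ?E = "\<lambda>m::nat. expect_perm m (\<lambda>\<pi>. travel (sweep_plan m \<pi>))"
  let ?T = "\<lambda>m::nat. expect_perm m (\<lambda>\<pi>. total_cost cp ct (sweep_plan m \<pi>))"
  let ?G = "\<lambda>m::nat. (real m + harm m - 2) * cp + real m ^ 2 * ct / 3"
  have lin: "?T m = (real m + harm m - 2) * cp + ?E m * ct" if "m \<ge> 1" for m
  proof -
    have "?T m = expect_perm m (\<lambda>\<pi>. real (num_pns (sweep_plan m \<pi>))) * cp + ?E m * ct"
      unfolding expect_perm_def total_cost_def
      by (simp add: sum.distrib sum_distrib_right[symmetric] add_divide_distrib)
    then show ?thesis using EN[OF that] by simp
  qed
  have key: "\<bar>?T m / ?G m - 1\<bar> \<le> (6 * real m + 1) / real m ^ 2" if m: "m \<ge> 1" for m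
  proof -
    have h: "harm m \<ge> (1::real)" using harm_ge1 m by simp
    have G0: "real m ^ 2 * ct / 3 \<le> ?G m" using h m cp by (simp add: mult_nonneg_nonneg)
    have m2: "real m ^ 2 > 0" using m by simp
    have Gp: "?G m > 0" using G0 m2 ct by (smt (verit) divide_pos_pos mult_pos_pos)
    have d: "?T m - ?G m = ct * (?E m - real m ^ 2 / 3)" using lin[OF m] by (simp add: algebra_simps)
    have b: "\<bar>?E m - real m ^ 2 / 3\<bar> \<le> 2 * real m + 1/3" using ET_bounds[OF m] unfolding abs_le_iff by (simp add: field_simps)
    have "\<bar>?T m / ?G m - 1\<bar> = \<bar>?T m - ?G m\<bar> / ?G m" using Gp by (simp add: field_simps)
    also have "\<dots> = ct * \<bar>?E m - real m ^ 2 / 3\<bar> / ?G m" unfolding d using ct by (simp add: abs_mult)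
    also have "\<dots> \<le> ct * (2 * real m + 1/3) / ?G m"
      using b ct Gp by (intro divide_right_mono mult_left_mono) auto
    also have "\<dots> \<le> ct * (2 * real m + 1/3) / (real m ^ 2 * ct / 3)"
      using G0 ct m2 Gp by (intro divide_left_mono) (auto intro!: mult_pos_pos)
    also have "\<dots> = (6 * real m + 1) / real m ^ 2" using ct m2 by (simp add: field_simps)
    finally show ?thesis .
  qed
  have key2: "- ((6 * real m + 1) / real m ^ 2) \<le> ?T m / ?G m - 1 \<and> ?T m / ?G m - 1 \<le> (6 * real m + 1) / real m ^ 2"
    if m: "m \<ge> 1" for m
  proof -
    have "\<bar>?T m / ?G m - 1\<bar> \<le> (6 * real m + 1) / real m ^ 2" by (rule key[OF m])
    then show ?thesis unfolding abs_le_iff by linarith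
  qed
  have Z: "((\<lambda>m::nat. (6 * real m + 1) / real m ^ 2) \<longlongrightarrow> 0) at_top" by real_asymp
  have "((\<lambda>m. ?T m / ?G m - 1) \<longlongrightarrow> 0) at_top"
  proof (rule tendsto_sandwich[where f = "\<lambda>m. - ((6 * real m + 1) / real m ^ 2)" and h = "\<lambda>m. (6 * real m + 1) / real m ^ 2"])
    show "\<forall>\<^sub>F m in at_top. - ((6 * real m + 1) / real m ^ 2) \<le> ?T m / ?G m - 1"
      using eventually_ge_at_top[of "1::nat"] by eventually_elim (use key2 in blast)
    show "\<forall>\<^sub>F m in at_top. ?T m / ?G m - 1 \<le> (6 * real m + 1) / real m ^ 2"
      using eventually_ge_at_top[of "1::nat"] by eventually_elim (use key2 in blast)
    show "((\<lambda>m. - ((6 * real m + 1) / real m ^ 2)) \<longlongrightarrow> 0) at_top" using tendsto_minus[OF Z] by simp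
  qed (rule Z)
  then have "((\<lambda>m. (?T m / ?G m - 1) + 1) \<longlongrightarrow> 0 + 1) at_top" by (intro tendsto_add) auto
  then show "((\<lambda>m. ?T m / ?G m) \<longlongrightarrow> 1) at_top" by simp
qed

theorem proposition3:
  shows "(\<forall>m::nat. m \<ge> 1 \<longrightarrow>
            expect_perm m (\<lambda>\<pi>. real (num_pns (sweep_plan m \<pi>))) = real m + harm m - 2)
       \<and> ((\<lambda>m::nat. expect_perm m (\<lambda>\<pi>. travel (sweep_plan m \<pi>))) \<sim>[at_top] (\<lambda>m. real m ^ 2 / 3))
       \<and> (\<forall>cp ct::real. cp > 0 \<longrightarrow> ct > 0 \<longrightarrow>
            ((\<lambda>m::nat. expect_perm m (\<lambda>\<pi>. total_cost cp ct (sweep_plan m \<pi>)))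
               \<sim>[at_top] (\<lambda>m. (real m + harm m - 2) * cp + real m ^ 2 * ct / 3)))"
  using EN ET_equiv total_equiv by blast


end
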